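(* Let $A$ be a VPA with $\emptyset\subsetneq\mathcal L(A)\subsetneq\Sigma^*$ and assume $S_0$ is bounded. For each $\tau\in Q^Q$ let $R_\tau$ be a bounded overapproximation of $\tau^{-1}S_1$, and let $\mathrm{RegFlat}=R_0(\Sigma_c\cup R_1)^*$ where $R_1=\bigcup_{\tau\in Q^Q}\tau R_\tau$ and $R_0=\bigcup_{\tau\in Q^Q}\mathsf{Suf}(R_\tau)$. Then $\nu_f(\mathrm{Flat})=\nu_f(\mathrm{RegFlat})=\mathrm{Rep}$.
   Context: VPA $A=(Q,\Sigma,\Gamma,\bot,q_0,\delta,F)$ over a pushdown alphabet $\Sigma=\Sigma_c\cup\Sigma_r\cup\Sigma_{\mathit{int}}$ ($\Sigma_c,\Sigma_r\ne\emptyset$), with configurations $\alpha q$ ($\alpha\in\bot(\Gamma\setminus\{\bot\})^*$), call letters pushing via $\delta_c:Q\times\Sigma_c\to(\Gamma\setminus\{\bot\})\times Q$, internal letters via $\delta_{\mathit{int}}:Q\times\Sigma_{\mathit{int}}\to Q$, return letters popping the top $\gamma\ne\bot$ via $\delta_r:Q\times\Sigma_r\times\Gamma\to Q$ (or reading $\bot$ without popping). $\delta(c,w)$ is the configuration reached; $\mathcal L(c)$ the words leading from $c$ to a state in $F$. $W$: well-matched words (smallest set containing $\varepsilon$, $\Sigma_{\mathit{int}}$, closed under concatenation and $w\mapsto awb$, $a\in\Sigma_c$, $b\in\Sigma_r$); $D$: descending words (products of well-matched words and return letters); $\varphi:W\to Q^Q$ with $\delta(\alpha p,w)=\alpha\varphi(w)(p)$.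 $\mathrm{rConf}$: configurations reachable from $\bot q_0$; $\mathsf{rep}(c)$: length-lexicographically least (for fixed linear orders on $\Gamma,Q$) $c'\in\mathrm{rConf}$ with $\mathcal L(c')=\mathcal L(c)$; $\mathrm{Rep}=\mathsf{rep}(\mathrm{rConf})$; $\nu_A(w)=\mathsf{rep}(\delta(\bot q_0,w))$. For $w=a_1\cdots a_n\in D$, $\nu_A(a_i\cdots a_n)=\bot q_i$; $\sigma_0(w)=q_1\cdots q_n$; for nonempty $w\in W$, $\sigma_1(w)=\varphi(w)q_2\cdots q_n$. $S_0=\sigma_0(D)$, $S_1=\sigma_1(W\setminus\{\varepsilon\})$. $\Sigma_f=\Sigma_c\cup Q\cup Q^Q$ (disjoint); $\mathrm{AllFlat}=Q^*(\Sigma_c\cup Q^QQ^* )^*$ with unique factorization $s_0s_1\cdots s_m$, $s_0\in Q^*$, $s_i\in\Sigma_c\cup Q^QQ^*$. $t_f$: $t_f(\varepsilon)=\bot q_0$, $t_f(q_1\cdots q_n)=\bot q_1$ ($n\ge1$), $t_f(s_0\cdots s_m)=\delta(t_f(s_0\cdots s_{m-1}),s_m)$ if $s_m\in\Sigma_c$, and $=\alpha\tau(q)$ if $s_m=\tau q_2\cdots q_k$ and $t_f(s_0\cdots s_{m-1})=\alpha q$. $\nu_f=\mathsf{rep}\circ t_f$. $\mathrm{Flat}=S_0(\Sigma_c\cup S_1)^*$. A language $K$ is bounded if $K\subseteq w_1^*\cdots w_k^*$. For $\tau\in Q^Q$, $\tau^{-1}S_1=\{x:\tau x\in S_1\}$.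 $\Psi(a_1\cdots a_n)=\{(a_i,n-i+1):1\le i\le n\}$ and $\Psi(K)=\bigcup_{w\in K}\Psi(w)$. A bounded overapproximation of a bounded context-free language $K$ is a bounded regular language $R\supseteq K$ with $\{|w|:w\in K\}=\{|w|:w\in R\}$ and $\Psi(K)=\Psi(R)$. $\mathsf{Suf}(L)$ is the set of all suffixes of words in $L$. *)

theory Defs
  imports Main
begin

(* Visibly pushdown automata.  States 'q, input letters 'a, stack symbols 'g.
   The input alphabet Sigma is the (finite) type 'a, partitioned into call,
   return and internal letters. *)
record ('q, 'a, 'g) vpa =
  sig_c :: "'a set"
  sig_r :: "'a set"
  sig_i :: "'a set"
  vbot  :: 'g
  q0    :: 'q
  dcall :: "'q \<Rightarrow> 'a \<Rightarrow> 'g \<times> 'q"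
  dint  :: "'q \<Rightarrow> 'a \<Rightarrow> 'q"
  dret  :: "'q \<Rightarrow> 'a \<Rightarrow> 'g \<Rightarrow> 'q"
  fin   :: "'q set"

definition wf_vpa :: "('q, 'a, 'g) vpa \<Rightarrow> bool" where
  "wf_vpa A \<longleftrightarrow>
     sig_c A \<union> sig_r A \<union> sig_i A = UNIV \<and>
     sig_c A \<inter> sig_r A = {} \<and> sig_c A \<inter> sig_i A = {} \<and> sig_r A \<inter> sig_i A = {} \<and>
     sig_c A \<noteq> {} \<and> sig_r A \<noteq> {} \<and>
     (\<forall>q a. a \<in> sig_c A \<longrightarrow> fst (dcall A q a) \<noteq> vbot A)"

(* A configuration alpha q: the stack alpha is a list whose first element is
   the bottom symbol and whose last element is the top of the stack. *)
type_synonym ('g, 'q) conf = "'g list \<times> 'q"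

definition dstep :: "('q, 'a, 'g) vpa \<Rightarrow> ('g, 'q) conf \<Rightarrow> 'a \<Rightarrow> ('g, 'q) conf" where
  "dstep A c a =
     (let al = fst c; q = snd c in
      if a \<in> sig_c A then (al @ [fst (dcall A q a)], snd (dcall A q a))
      else if a \<in> sig_i A then (al, dint A q a)
      else if last al = vbot A then (al, dret A q a (vbot A))
      else (butlast al, dret A q a (last al)))"

definition delta :: "('q, 'a, 'g) vpa \<Rightarrow> ('g, 'q) conf \<Rightarrow> 'a list \<Rightarrow> ('g, 'q) conf" where
  "delta A c w = foldl (dstep A) c w"

definition init_conf :: "('q, 'a, 'g) vpa \<Rightarrow> ('g, 'q) conf" where
  "init_conf A = ([vbot A], q0 A)"

definition lang :: "('q, 'a, 'g) vpa \<Rightarrow> ('g, 'q) conf \<Rightarrow> 'a list set" where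
  "lang A c = {w. snd (delta A c w) \<in> fin A}"

definition rConf :: "('q, 'a, 'g) vpa \<Rightarrow> ('g, 'q) conf set" where
  "rConf A = {delta A (init_conf A) w | w. True}"

definition conf_less :: "('g::linorder, 'q::linorder) conf \<Rightarrow> ('g, 'q) conf \<Rightarrow> bool" where
  "conf_less c d \<longleftrightarrow>
     length (fst c) < length (fst d) \<or>
     (length (fst c) = length (fst d) \<and>
       ((fst c, fst d) \<in> lexord {(x, y). x < y} \<or> (fst c = fst d \<and> snd c < snd d)))"

definition rep :: "('q::linorder, 'a, 'g::linorder) vpa \<Rightarrow> ('g, 'q) conf \<Rightarrow> ('g, 'q) conf" where
  "rep A c = (THE c'. c' \<in> rConf A \<and> lang A c' = lang A c \<and>
                 (\<forall>d \<in> rConf A. lang A d = lang A c \<longrightarrow> d = c' \<or> conf_less c' d))"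

definition Rep :: "('q::linorder, 'a, 'g::linorder) vpa \<Rightarrow> ('g, 'q) conf set" where
  "Rep A = rep A ` rConf A"

definition nuA :: "('q::linorder, 'a, 'g::linorder) vpa \<Rightarrow> 'a list \<Rightarrow> ('g, 'q) conf" where
  "nuA A w = rep A (delta A (init_conf A) w)"

inductive_set WM :: "('q, 'a, 'g) vpa \<Rightarrow> 'a list set" for A where
  wm_eps: "[] \<in> WM A"
| wm_int: "a \<in> sig_i A \<Longrightarrow> [a] \<in> WM A"
| wm_cat: "u \<in> WM A \<Longrightarrow> v \<in> WM A \<Longrightarrow> u @ v \<in> WM A"
| wm_nest: "a \<in> sig_c A \<Longrightarrow> w \<in> WM A \<Longrightarrow> b \<in> sig_r A \<Longrightarrow> a # w @ [b] \<in> WM A"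

inductive_set DW :: "('q, 'a, 'g) vpa \<Rightarrow> 'a list set" for A where
  dw_eps: "[] \<in> DW A"
| dw_wm: "w \<in> WM A \<Longrightarrow> u \<in> DW A \<Longrightarrow> w @ u \<in> DW A"
| dw_ret: "b \<in> sig_r A \<Longrightarrow> u \<in> DW A \<Longrightarrow> b # u \<in> DW A"

definition phi :: "('q, 'a, 'g) vpa \<Rightarrow> 'a list \<Rightarrow> 'q \<Rightarrow> 'q" where
  "phi A w = (\<lambda>p. snd (delta A ([vbot A], p) w))"

datatype ('a, 'q) fsym = FC 'a | FQ 'q | FT "'q \<Rightarrow> 'q"

fun is_FQ :: "('a, 'q) fsym \<Rightarrow> bool" where
  "is_FQ (FQ _) = True"
| "is_FQ _ = False"

definition sigma0 :: "('q::linorder, 'a, 'g::linorder) vpa \<Rightarrow> 'a list \<Rightarrow> ('a, 'q) fsym list" where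
  "sigma0 A w = map (\<lambda>i. FQ (snd (nuA A (drop i w)))) [0..<length w]"

definition sigma1 :: "('q::linorder, 'a, 'g::linorder) vpa \<Rightarrow> 'a list \<Rightarrow> ('a, 'q) fsym list" where
  "sigma1 A w = FT (phi A w) # map (\<lambda>i. FQ (snd (nuA A (drop i w)))) [1..<length w]"

definition S0 :: "('q::linorder, 'a, 'g::linorder) vpa \<Rightarrow> ('a, 'q) fsym list set" where
  "S0 A = sigma0 A ` DW A"

definition S1 :: "('q::linorder, 'a, 'g::linorder) vpa \<Rightarrow> ('a, 'q) fsym list set" where
  "S1 A = sigma1 A ` (WM A - {[]})"

fun tf_step :: "('q, 'a, 'g) vpa \<Rightarrow> ('g, 'q) conf \<Rightarrow> ('a, 'q) fsym \<Rightarrow> ('g, 'q) conf" where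
  "tf_step A c (FC a) = dstep A c a"
| "tf_step A c (FT \<tau>) = (fst c, \<tau> (snd c))"
| "tf_step A c (FQ _) = c"

definition tf_start :: "('q, 'a, 'g) vpa \<Rightarrow> ('a, 'q) fsym list \<Rightarrow> ('g, 'q) conf" where
  "tf_start A w = (case w of FQ q # _ \<Rightarrow> ([vbot A], q) | _ \<Rightarrow> ([vbot A], q0 A))"

definition tf :: "('q, 'a, 'g) vpa \<Rightarrow> ('a, 'q) fsym list \<Rightarrow> ('g, 'q) conf" where
  "tf A w = foldl (tf_step A) (tf_start A w) (dropWhile is_FQ w)"

definition nu_f :: "('q::linorder, 'a, 'g::linorder) vpa \<Rightarrow> ('a, 'q) fsym list \<Rightarrow> ('g, 'q) conf" where
  "nu_f A w = rep A (tf A w)"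

definition conc :: "'b list set \<Rightarrow> 'b list set \<Rightarrow> 'b list set" where
  "conc K L = {u @ v | u v. u \<in> K \<and> v \<in> L}"

definition kstar :: "'b list set \<Rightarrow> 'b list set" where
  "kstar K = {concat ws | ws. set ws \<subseteq> K}"

definition Suf :: "'b list set \<Rightarrow> 'b list set" where
  "Suf L = {v. \<exists>u. u @ v \<in> L}"

definition Flat :: "('q::linorder, 'a, 'g::linorder) vpa \<Rightarrow> ('a, 'q) fsym list set" where
  "Flat A = conc (S0 A) (kstar ({[FC a] | a. a \<in> sig_c A} \<union> S1 A))"

definition RegFlat :: "('q, 'a, 'g) vpa \<Rightarrow> (('q \<Rightarrow> 'q) \<Rightarrow> ('a, 'q) fsym list set)
                        \<Rightarrow> ('a, 'q) fsym list set" where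
  "RegFlat A R =
     (let R1 = (\<Union>\<tau>. (\<lambda>x. FT \<tau> # x) ` R \<tau>);
          R0 = (\<Union>\<tau>. Suf (R \<tau>))
      in conc R0 (kstar ({[FC a] | a. a \<in> sig_c A} \<union> R1)))"

definition bounded :: "'b list set \<Rightarrow> bool" where
  "bounded K \<longleftrightarrow> (\<exists>ws :: 'b list list. \<forall>u \<in> K. \<exists>ns :: nat list.
       length ns = length ws \<and> u = concat (map2 (\<lambda>w n. concat (replicate n w)) ws ns))"

definition regular :: "'b list set \<Rightarrow> bool" where
  "regular L \<longleftrightarrow> (\<exists>(N :: nat) (d :: nat \<Rightarrow> 'b \<Rightarrow> nat) (s :: nat) (F :: nat set).
       s < N \<and> (\<forall>q < N. \<forall>x. d q x < N) \<and> L = {w. foldl d s w \<in> F})"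

definition Psi :: "'b list \<Rightarrow> ('b \<times> nat) set" where
  "Psi w = {(w ! i, length w - i) | i. i < length w}"

definition Psi_set :: "'b list set \<Rightarrow> ('b \<times> nat) set" where
  "Psi_set K = (\<Union>w \<in> K. Psi w)"

definition bounded_overapprox :: "'b list set \<Rightarrow> 'b list set \<Rightarrow> bool" where
  "bounded_overapprox K R \<longleftrightarrow>
     bounded R \<and> regular R \<and> K \<subseteq> R \<and> length ` K = length ` R \<and> Psi_set K = Psi_set R"

end

theory Submission
  imports Defs "HOL-Library.List_Lexorder" "HOL-Library.Product_Lexorder"
begin

lemma delta_append: "delta A c (u @ v) = delta A (delta A c u) v"
  by (simp add: delta_def)

lemma delta_Nil[simp]: "delta A c [] = c" by (simp add: delta_def)

lemma delta_Cons: "delta A c (a # u) = delta A (dstep A c a) u" by (simp add: delta_def)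

lemma lang_delta: "lang A (delta A c u) = {x. u @ x \<in> lang A c}"
  by (auto simp: lang_def delta_append)

lemma lang_delta_cong: "lang A c = lang A d \<Longrightarrow> lang A (delta A c u) = lang A (delta A d u)"
  by (simp add: lang_delta)

lemma rConf_delta: "d \<in> rConf A \<Longrightarrow> delta A d u \<in> rConf A"
  unfolding rConf_def by (auto simp: delta_append[symmetric])

lemma init_rConf: "init_conf A \<in> rConf A"
  unfolding rConf_def by (auto intro: exI[of _ "[]"])

lemma wf_facts:
  assumes "wf_vpa A"
  shows "a \<in> sig_c A \<Longrightarrow> a \<notin> sig_i A" "a \<in> sig_c A \<Longrightarrow> a \<notin> sig_r A"
    "a \<in> sig_r A \<Longrightarrow> a \<notin> sig_c A" "a \<in> sig_r A \<Longrightarrow> a \<notin> sig_i A"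
    "a \<in> sig_i A \<Longrightarrow> a \<notin> sig_c A"
    "a \<notin> sig_c A \<Longrightarrow> a \<notin> sig_i A \<Longrightarrow> a \<in> sig_r A"
    "a \<in> sig_c A \<Longrightarrow> fst (dcall A q a) \<noteq> vbot A"
  using assms unfolding wf_vpa_def by blast+

lemma WM_delta_gen:
  assumes wf: "wf_vpa A" and v: "v \<in> WM A"
  shows "\<forall>al al' p. fst (delta A (al,p) v) = al \<and> snd (delta A (al,p) v) = snd (delta A (al',p) v)"
  using v
proof induction
  case wm_eps then show ?case by simp
next
  case (wm_int a)
  then have "a \<notin> sig_c A" using wf_facts[OF wf] by blast
  then show ?case by (simp add: delta_def dstep_def wm_int)
next
  case (wm_cat u v)
  show ?case
  proof (intro allI)
    fix al al' p
    obtain pu where pu: "pu = snd (delta A (al',p) u)" by blast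
    have e1: "delta A (al,p) u = (al, pu)"
      using wm_cat.IH(1) pu by (metis prod.collapse)
    have e2: "delta A (al',p) u = (al', pu)"
      using wm_cat.IH(1) pu by (metis prod.collapse)
    show "fst (delta A (al,p) (u@v)) = al \<and> snd (delta A (al,p) (u@v)) = snd (delta A (al',p) (u@v))"
      unfolding delta_append e1 e2 using wm_cat.IH(2) by blast
  qed
next
  case (wm_nest a w b)
  show ?case
  proof (intro allI)
    fix al al' p
    obtain g p1 where gp: "dcall A p a = (g, p1)" by (cases "dcall A p a")
    have g: "g \<noteq> vbot A" using wf_facts(7)[OF wf wm_nest(1), of p] gp by simp
    have bnot: "b \<notin> sig_c A" "b \<notin> sig_i A" using wf_facts[OF wf] wm_nest(3) by blast+
    have d1: "dstep A (x, p) a = (x @ [g], p1)" for x using gp wm_nest(1) by (simp add: dstep_def)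
    define p2 where "p2 = snd (delta A ([vbot A] @ [g], p1) w)"
    have d2: "delta A (x @ [g], p1) w = (x @ [g], p2)" for x
      using wm_nest.IH unfolding p2_def by (metis prod.collapse)
    have d3: "delta A (x, p) (a # w @ [b]) = (x, dret A p2 b g)" for x
      using d1 d2 g bnot by (simp add: delta_Cons delta_append dstep_def delta_def[of A _ "[b]"])
    show "fst (delta A (al,p) (a # w @ [b])) = al \<and> snd (delta A (al,p) (a # w @ [b])) = snd (delta A (al',p) (a # w @ [b]))"
      using d3 by simp
  qed
qed

lemma WM_delta:
  assumes wf: "wf_vpa A" and v: "v \<in> WM A"
  shows "delta A (al, p) v = (al, phi A v p)"
  using WM_delta_gen[OF wf v] unfolding phi_def by (metis prod.collapse)

lemma DW_append: "u \<in> DW A \<Longrightarrow> v \<in> DW A \<Longrightarrow> u @ v \<in> DW A"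
  by (induction rule: DW.induct) (auto intro: DW.intros)

lemma WM_DW: "v \<in> WM A \<Longrightarrow> v \<in> DW A"
  by (metis append_Nil2 dw_eps dw_wm)

lemma drop_WM_DW: "v \<in> WM A \<Longrightarrow> drop i v \<in> DW A"
proof (induction arbitrary: i rule: WM.induct)
  case wm_eps then show ?case by (simp add: dw_eps)
next
  case (wm_int a) then show ?case
    by (cases i) (auto intro: WM_DW WM.intros dw_eps)
next
  case (wm_cat u v) then show ?case by (simp add: DW_append)
next
  case (wm_nest a w b)
  show ?case
  proof (cases i)
    case 0 then show ?thesis using wm_nest by (auto intro: WM_DW WM.intros)
  next
    case (Suc j)
    have "drop (j - length w) [b] \<in> DW A"
      using wm_nest(3) by (cases "j - length w") (auto intro: DW.intros)
    then show ?thesis using Suc DW_append[OF wm_nest.IH[of j]] by simp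
  qed
qed

lemma DW_stack:
  assumes wf: "wf_vpa A" and u: "u \<in> DW A"
  shows "fst (delta A ([vbot A], p) u) = [vbot A]"
  using u
proof (induction arbitrary: p rule: DW.induct)
  case dw_eps then show ?case by simp
next
  case (dw_wm w u) then show ?case by (simp add: delta_append WM_delta[OF wf])
next
  case (dw_ret b u)
  have "b \<notin> sig_c A" "b \<notin> sig_i A" using wf_facts[OF wf] dw_ret(1) by blast+
  then show ?case using dw_ret.IH by (simp add: delta_Cons dstep_def)
qed

lemma DW_prefix:
  assumes a: "a \<in> sig_c A" and u: "u \<in> DW A"
  shows "\<exists>k. \<forall>y \<in> WM A. replicate k a @ y @ u \<in> WM A"
  using u
proof (induction rule: DW.induct)
  case dw_eps then show ?case by (auto intro: exI[of _ 0])
next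
  case (dw_wm w u)
  then obtain k where k: "\<forall>y \<in> WM A. replicate k a @ y @ u \<in> WM A" by blast
  show ?case
  proof (intro exI ballI)
    fix y assume "y \<in> WM A"
    then have "y @ w \<in> WM A" using dw_wm(1) by (rule wm_cat)
    then show "replicate k a @ y @ w @ u \<in> WM A" using k by force
  qed
next
  case (dw_ret b u)
  then obtain k where k: "\<forall>y \<in> WM A. replicate k a @ y @ u \<in> WM A" by blast
  show ?case
  proof (intro exI ballI)
    fix y assume "y \<in> WM A"
    then have "a # y @ [b] \<in> WM A" using a dw_ret(1) by (intro wm_nest)
    then have "replicate k a @ (a # y @ [b]) @ u \<in> WM A" using k by blast
    then show "replicate (Suc k) a @ y @ b # u \<in> WM A"
      by (simp add: replicate_app_Cons_same)
  qed
qed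

lemma rConf_stack:
  assumes "c \<in> rConf A"
  shows "fst c \<noteq> [] \<and> hd (fst c) = vbot A"
proof -
  obtain w where c: "c = delta A (init_conf A) w" using assms unfolding rConf_def by blast
  have "fst (delta A (init_conf A) w) \<noteq> [] \<and> hd (fst (delta A (init_conf A) w)) = vbot A"
  proof (induction w rule: rev_induct)
    case Nil then show ?case by (simp add: init_conf_def)
  next
    case (snoc x w)
    obtain al q where e: "delta A (init_conf A) w = (al, q)" by (cases "delta A (init_conf A) w")
    have al: "al \<noteq> []" "hd al = vbot A" using snoc e by auto
    have bl: "last al \<noteq> vbot A \<Longrightarrow> butlast al \<noteq> [] \<and> hd (butlast al) = vbot A"
      using al by (cases al) (auto split: if_splits)
    show ?case using al bl unfolding delta_append e
      by (auto simp: delta_def dstep_def Let_def hd_append)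
  qed
  then show ?thesis using c by simp
qed

definition ckey :: "('g, 'q) conf \<Rightarrow> nat \<times> 'g list \<times> 'q" where
  "ckey c = (length (fst c), fst c, snd c)"

lemma conf_less_key: "conf_less c d \<longleftrightarrow> ckey c < ckey d"
  by (auto simp: conf_less_def ckey_def less_prod_def' list_less_def)

lemma ckey_inj: "ckey c = ckey d \<Longrightarrow> c = d"
  by (simp add: ckey_def prod_eq_iff)


lemma rep_cong: "lang A c = lang A d \<Longrightarrow> rep A c = rep A d"
  unfolding rep_def by simp

lemma rep_spec:
  fixes A :: "('q::{finite,linorder}, 'a, 'g::{finite,linorder}) vpa"
  assumes c: "c \<in> rConf A"
  shows "rep A c \<in> rConf A \<and> lang A (rep A c) = lang A c \<and>
         (\<forall>d \<in> rConf A. lang A d = lang A c \<longrightarrow> d = rep A c \<or> conf_less (rep A c) d)"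
proof -
  let ?M = "{d \<in> rConf A. lang A d = lang A c}"
  let ?P = "\<lambda>c'. c' \<in> rConf A \<and> lang A c' = lang A c \<and> (\<forall>d \<in> rConf A. lang A d = lang A c \<longrightarrow> d = c' \<or> conf_less c' d)"
  define l where "l = (LEAST n. \<exists>d \<in> ?M. length (fst d) = n)"
  have lex: "\<exists>d \<in> ?M. length (fst d) = l" unfolding l_def
    by (rule LeastI[where k="length (fst c)"]) (use c in blast)
  have lle: "d \<in> ?M \<Longrightarrow> l \<le> length (fst d)" for d
    unfolding l_def by (rule Least_le) blast
  define S where "S = {d \<in> ?M. length (fst d) = l}"
  have Sne: "S \<noteq> {}" using lex S_def by auto
  have "S \<subseteq> {xs. set xs \<subseteq> UNIV \<and> length xs = l} \<times> UNIV" unfolding S_def by auto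
  moreover have "finite ({xs::'g list. set xs \<subseteq> UNIV \<and> length xs = l} \<times> (UNIV::'q set))"
    by (intro finite_cartesian_product finite_lists_length_eq) auto
  ultimately have finS: "finite S" by (rule finite_subset)
  have "Min (ckey ` S) \<in> ckey ` S" using finS Sne by (intro Min_in) auto
  then obtain z where zS: "z \<in> S" and zmin: "ckey z = Min (ckey ` S)" by auto
  have Pz: "?P z"
  proof -
    have "d = z \<or> conf_less z d" if d: "d \<in> rConf A" "lang A d = lang A c" for d
    proof (cases "length (fst d) = l")
      case True
      then have "d \<in> S" using d S_def by auto
      then have "ckey z \<le> ckey d" using zmin finS by simp
      then show ?thesis using ckey_inj conf_less_key by (metis order.order_iff_strict)
    next
      case False
      then have "l < length (fst d)" using lle d by fastforce
      then show ?thesis using zS S_def by (simp add: conf_less_def)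
    qed
    then show ?thesis using zS S_def by auto
  qed
  have uniq: "c' = z" if "?P c'" for c'
  proof -
    have "c' = z \<or> conf_less z c'" using Pz that by blast
    moreover have "z = c' \<or> conf_less c' z" using Pz that by blast
    ultimately show ?thesis using conf_less_key by (metis less_asym)
  qed
  have "?P (THE x. ?P x)" by (rule theI[of ?P z]) (use Pz uniq in blast)+
  then show ?thesis unfolding rep_def .
qed

lemma rep_bot:
  fixes A :: "('q::{finite,linorder}, 'a, 'g::{finite,linorder}) vpa"
  assumes c: "c \<in> rConf A" and f: "fst c = [vbot A]"
  shows "rep A c = ([vbot A], snd (rep A c))"
proof -
  have sp: "rep A c \<in> rConf A" "c = rep A c \<or> conf_less (rep A c) c" using rep_spec[OF c] c by auto
  have "length (fst (rep A c)) \<le> 1" using sp(2) f by (auto simp: conf_less_def)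
  moreover have "fst (rep A c) \<noteq> [] \<and> hd (fst (rep A c)) = vbot A" using rConf_stack[OF sp(1)] .
  ultimately have "fst (rep A c) = [vbot A]" by (cases "fst (rep A c)") auto
  then show ?thesis by (metis prod.collapse)
qed

lemma start_lang:
  fixes A :: "('q::{finite,linorder}, 'a, 'g::{finite,linorder}) vpa"
  assumes wf: "wf_vpa A" and s: "s \<in> DW A"
  shows "lang A ([vbot A], snd (nuA A s)) = lang A (delta A (init_conf A) s)"
proof -
  let ?c = "delta A (init_conf A) s"
  have cr: "?c \<in> rConf A" using rConf_delta[OF init_rConf] .
  have "fst ?c = [vbot A]" using DW_stack[OF wf s] by (simp add: init_conf_def)
  then have "rep A ?c = ([vbot A], snd (rep A ?c))" using rep_bot[OF cr] by blast
  then show ?thesis using rep_spec[OF cr] unfolding nuA_def by metis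
qed

lemma Rep_memI:
  fixes A :: "('q::{finite,linorder}, 'a, 'g::{finite,linorder}) vpa"
  assumes "d \<in> rConf A" "lang A c = lang A d"
  shows "rep A c \<in> Rep A"
  unfolding Rep_def using rep_cong[OF assms(2)] assms(1) by (metis image_eqI)



lemma fold_allFQ: "\<forall>x\<in>set y. is_FQ x \<Longrightarrow> foldl (tf_step A) c y = c"
proof (induction y)
  case (Cons x y) then show ?case by (cases x) auto
qed simp

lemma concat_nonFQ:
  assumes "\<forall>p\<in>set ws. p \<noteq> [] \<and> \<not> is_FQ (hd p)"
  shows "dropWhile is_FQ (concat ws) = concat ws \<and> tf_start A (concat ws) = init_conf A"
proof (cases ws)
  case Nil then show ?thesis by (simp add: tf_start_def init_conf_def)
next
  case (Cons p ws')
  with assms obtain x p' where "p = x # p'" "\<not> is_FQ x" by (cases p) auto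
  then show ?thesis using Cons by (cases x) (auto simp: tf_start_def init_conf_def)
qed

lemma fold_concat:
  assumes "\<forall>p\<in>set ps. \<forall>c. foldl (tf_step A) c (fl p) = delta A c p"
  shows "foldl (tf_step A) c (concat (map fl ps)) = delta A c (concat ps)"
  using assms by (induction ps arbitrary: c) (auto simp: delta_append)

lemma fold_concat_ex:
  assumes "\<forall>p\<in>set ws. \<exists>u. \<forall>c. foldl (tf_step A) c p = delta A c u"
  shows "\<exists>u. \<forall>c. foldl (tf_step A) c (concat ws) = delta A c u"
  using assms
proof (induction ws)
  case Nil then show ?case by (auto intro: exI[of _ "[]"])
next
  case (Cons p ws)
  obtain u1 where h1: "\<And>c. foldl (tf_step A) c p = delta A c u1" using Cons.prems by auto
  obtain u2 where h2: "\<And>c. foldl (tf_step A) c (concat ws) = delta A c u2" using Cons by auto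
  have "foldl (tf_step A) c (concat (p # ws)) = delta A c (u1 @ u2)" for c
    by (simp only: concat.simps foldl_append h1 h2 delta_append)
  then show ?case by blast
qed

lemma concat_WM: "\<forall>z\<in>set zs. z \<in> WM A \<Longrightarrow> concat zs \<in> WM A"
  by (induction zs) (auto intro: WM.intros)

lemma decomp:
  assumes wf: "wf_vpa A"
  shows "\<exists>u0 ps. w = u0 @ concat ps \<and> u0 \<in> DW A \<and>
           (\<forall>p\<in>set ps. (\<exists>a\<in>sig_c A. p = [a]) \<or> (p \<in> WM A \<and> p \<noteq> []))"
proof (induction w rule: rev_induct)
  case Nil then show ?case by (auto intro: dw_eps intro!: exI[of _ "[]"])
next
  case (snoc x w)
  then obtain u0 ps where H: "w = u0 @ concat ps" "u0 \<in> DW A"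
     "\<forall>p\<in>set ps. (\<exists>a\<in>sig_c A. p = [a]) \<or> (p \<in> WM A \<and> p \<noteq> [])" by blast
  consider "x \<in> sig_c A" | "x \<in> sig_i A" | "x \<in> sig_r A" using wf unfolding wf_vpa_def by blast
  then show ?case
  proof cases
    case 1
    then show ?thesis using H by (intro exI[of _ u0] exI[of _ "ps @ [[x]]"]) auto
  next
    case 2
    then have "[x] \<in> WM A" by (rule wm_int)
    then show ?thesis using H by (intro exI[of _ u0] exI[of _ "ps @ [[x]]"]) auto
  next
    case 3
    let ?P = "\<lambda>p. \<exists>a\<in>sig_c A. p = [a]"
    show ?thesis
    proof (cases "\<exists>p\<in>set ps. ?P p")
      case True
      then obtain ys p zs where s: "ps = ys @ p # zs" "?P p" "\<forall>z\<in>set zs. \<not> ?P z"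
        using split_list_last_prop[of ps ?P] by blast
      then obtain a where a: "a \<in> sig_c A" "p = [a]" by blast
      have zW: "\<forall>z\<in>set zs. z \<in> WM A" using s H by auto
      have "concat zs \<in> WM A" using concat_WM[OF zW] .
      then have n: "a # concat zs @ [x] \<in> WM A" using a 3 by (intro wm_nest)
      show ?thesis using H s a n
        by (intro exI[of _ u0] exI[of _ "ys @ [a # concat zs @ [x]]"]) auto
    next
      case False
      then have "\<forall>p\<in>set ps. p \<in> WM A" using H by auto
      then have cW: "concat ps \<in> WM A" by (rule concat_WM)
      have xD: "[x] \<in> DW A" using dw_ret[OF 3 dw_eps] .
      have "u0 @ concat ps @ [x] \<in> DW A"
        using DW_append[OF H(2) DW_append[OF WM_DW[OF cW] xD]] .
      then show ?thesis using H by (intro exI[of _ "u0 @ concat ps @ [x]"] exI[of _ "[]"]) auto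
    qed
  qed
qed

lemma conc_mono: "K \<subseteq> K' \<Longrightarrow> L \<subseteq> L' \<Longrightarrow> conc K L \<subseteq> conc K' L'"
  unfolding conc_def by blast

lemma kstar_mono: "K \<subseteq> K' \<Longrightarrow> kstar K \<subseteq> kstar K'"
  unfolding kstar_def by blast

context
  fixes A :: "('q::{finite,linorder}, 'a::finite, 'g::{finite,linorder}) vpa"
    and R :: "('q \<Rightarrow> 'q) \<Rightarrow> ('a, 'q) fsym list set"
  assumes wf: "wf_vpa A"
    and ov: "\<And>\<tau>. bounded_overapprox {x. FT \<tau> # x \<in> S1 A} (R \<tau>)"
begin

lemma RK1:
  assumes y: "y \<in> R \<tau>" and j: "j < length y"
  shows "\<exists>v\<in>WM A. \<exists>i. y ! j = FQ (snd (nuA A (drop i v)))"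
proof -
  have "(y ! j, length y - j) \<in> Psi_set (R \<tau>)" using y j unfolding Psi_set_def Psi_def by blast
  then have "(y ! j, length y - j) \<in> Psi_set {x. FT \<tau> # x \<in> S1 A}"
    using ov[of \<tau>] unfolding bounded_overapprox_def by simp
  then obtain y' i where y': "FT \<tau> # y' \<in> S1 A" "i < length y'" "y' ! i = y ! j"
    unfolding Psi_set_def Psi_def by auto
  then obtain v where v: "v \<in> WM A" "FT \<tau> # y' = sigma1 A v" unfolding S1_def by auto
  then have "y' = map (\<lambda>i. FQ (snd (nuA A (drop i v)))) [1..<length v]" by (simp add: sigma1_def)
  then have "y' ! i = FQ (snd (nuA A (drop (Suc i) v)))" using y'(2) by simp
  then show ?thesis using v y' by metis
qed

lemma RFQ:
  assumes "y \<in> R \<tau>"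
  shows "\<forall>x\<in>set y. is_FQ x"
proof
  fix x assume "x \<in> set y"
  then obtain j where j: "j < length y" "x = y ! j" by (auto simp: in_set_conv_nth)
  then show "is_FQ x" using RK1[OF assms j(1)] by auto
qed

lemma RK2:
  assumes y: "y \<in> R \<tau>"
  shows "\<exists>v\<in>WM A. \<tau> = phi A v"
proof -
  have "length y \<in> length ` R \<tau>" using y by blast
  then have "length y \<in> length ` {x. FT \<tau> # x \<in> S1 A}"
    using ov[of \<tau>] by (simp add: bounded_overapprox_def)
  then obtain y' where "FT \<tau> # y' \<in> S1 A" by auto
  then obtain v where "v \<in> WM A" "FT \<tau> # y' = sigma1 A v" unfolding S1_def by auto
  then show ?thesis by (auto simp: sigma1_def)
qed

lemma R1_piece:
  assumes "p \<in> {[FC a] | a. a \<in> sig_c A} \<union> (\<Union>\<tau>. (\<lambda>x. FT \<tau> # x) ` R \<tau>)"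
  shows "p \<noteq> [] \<and> \<not> is_FQ (hd p) \<and> (\<exists>u. \<forall>c. foldl (tf_step A) c p = delta A c u)"
  using assms
proof
  assume "p \<in> {[FC a] | a. a \<in> sig_c A}"
  then obtain a where "p = [FC a]" by blast
  then show ?thesis by (auto simp: delta_def intro!: exI[of _ "[a]"])
next
  assume "p \<in> (\<Union>\<tau>. (\<lambda>x. FT \<tau> # x) ` R \<tau>)"
  then obtain \<tau> y where p: "p = FT \<tau> # y" "y \<in> R \<tau>" by blast
  obtain v where v: "v \<in> WM A" "\<tau> = phi A v" using RK2[OF p(2)] by blast
  have "foldl (tf_step A) (al, q) p = delta A (al, q) v" for al q
    using fold_allFQ[OF RFQ[OF p(2)]] p v WM_delta[OF wf v(1), of al q] by simp
  then have "\<forall>c. foldl (tf_step A) c p = delta A c v" by auto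
  then show ?thesis using p by auto
qed

lemma S1_sub: "S1 A \<subseteq> (\<Union>\<tau>. (\<lambda>x. FT \<tau> # x) ` R \<tau>)"
proof
  fix s assume s: "s \<in> S1 A"
  then obtain v where "s = sigma1 A v" unfolding S1_def by auto
  then obtain y where sy: "s = FT (phi A v) # y" by (simp add: sigma1_def)
  then have "y \<in> {x. FT (phi A v) # x \<in> S1 A}" using s by simp
  then have "y \<in> R (phi A v)" using ov[of "phi A v"] unfolding bounded_overapprox_def by blast
  then show "s \<in> (\<Union>\<tau>. (\<lambda>x. FT \<tau> # x) ` R \<tau>)" using sy by blast
qed

lemma S0_sub: "S0 A \<subseteq> (\<Union>\<tau>. Suf (R \<tau>))"
proof
  fix s assume "s \<in> S0 A"
  then obtain u0 where u0: "u0 \<in> DW A" "s = sigma0 A u0" unfolding S0_def by auto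
  obtain a where a: "a \<in> sig_c A" using wf unfolding wf_vpa_def by blast
  obtain b where b: "b \<in> sig_r A" using wf unfolding wf_vpa_def by blast
  obtain k where k: "\<forall>y \<in> WM A. replicate k a @ y @ u0 \<in> WM A" using DW_prefix[OF a u0(1)] by blast
  have ab: "[a, b] \<in> WM A" using wm_nest[OF a wm_eps b] by simp
  define pre where "pre = replicate k a @ [a, b]"
  define v where "v = pre @ u0"
  have vW: "v \<in> WM A" using k ab unfolding v_def pre_def by force
  have vne: "v \<noteq> []" unfolding v_def pre_def by simp
  define f where "f = (\<lambda>i. FQ (snd (nuA A (drop i v))) :: ('a,'q) fsym)"
  define m where "m = length pre"
  have m1: "1 \<le> m" unfolding m_def pre_def by simp
  have lv: "length v = m + length u0" unfolding v_def m_def by simp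
  have split: "[1..<length v] = [1..<m] @ [m..<length v]"
    using upt_add_eq_append[OF m1, of "length u0"] lv by simp
  have dr: "drop (m + i) v = drop i u0" for i unfolding v_def m_def by simp
  have tail: "map f [m..<length v] = sigma0 A u0"
    by (rule nth_equalityI) (auto simp: sigma0_def f_def lv dr)
  have e: "sigma1 A v = FT (phi A v) # map f [1..<length v]" by (simp add: sigma1_def f_def)
  have "sigma1 A v \<in> S1 A" unfolding S1_def using vW vne by blast
  then have "map f [1..<length v] \<in> {x. FT (phi A v) # x \<in> S1 A}"
    using e by simp
  then have "map f [1..<length v] \<in> R (phi A v)"
    using ov[of "phi A v"] unfolding bounded_overapprox_def by blast
  then have "map f [1..<m] @ sigma0 A u0 \<in> R (phi A v)" using split tail by simp
  then show "s \<in> (\<Union>\<tau>. Suf (R \<tau>))" using u0 unfolding Suf_def by blast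
qed

lemma Flat_sub: "Flat A \<subseteq> RegFlat A R"
  unfolding Flat_def RegFlat_def Let_def
  by (intro conc_mono kstar_mono Un_mono subset_refl S0_sub S1_sub)

lemma RegFlat_sub: "nu_f A ` RegFlat A R \<subseteq> Rep A"
proof
  fix r assume "r \<in> nu_f A ` RegFlat A R"
  then obtain w where w: "w \<in> RegFlat A R" "r = nu_f A w" by blast
  let ?PS = "{[FC a] | a. a \<in> sig_c A} \<union> (\<Union>\<tau>. (\<lambda>x. FT \<tau> # x) ` R \<tau>)"
  have "w \<in> conc (\<Union>\<tau>. Suf (R \<tau>)) (kstar ?PS)" using w(1) unfolding RegFlat_def Let_def .
  then obtain x0 z where xz: "w = x0 @ z" "x0 \<in> (\<Union>\<tau>. Suf (R \<tau>))" "z \<in> kstar ?PS"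
    unfolding conc_def by blast
  from xz(2) obtain \<tau>0 where "x0 \<in> Suf (R \<tau>0)" by blast
  then obtain u0 where u0: "u0 @ x0 \<in> R \<tau>0" unfolding Suf_def by blast
  from xz(3) obtain ws where ws: "z = concat ws" "set ws \<subseteq> ?PS" unfolding kstar_def by blast
  have d: "w = x0 @ concat ws" "u0 @ x0 \<in> R \<tau>0" "set ws \<subseteq> ?PS" using xz ws u0 by auto
  have pc: "\<forall>p\<in>set ws. p \<noteq> [] \<and> \<not> is_FQ (hd p)"
    and pf: "\<forall>p\<in>set ws. \<exists>u. \<forall>c. foldl (tf_step A) c p = delta A c u"
  proof -
    have pp: "p \<noteq> [] \<and> \<not> is_FQ (hd p) \<and> (\<exists>u. \<forall>c. foldl (tf_step A) c p = delta A c u)"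
      if "p \<in> set ws" for p
      using R1_piece[of p] d(3) that by (meson subsetD)
    show "\<forall>p\<in>set ws. p \<noteq> [] \<and> \<not> is_FQ (hd p)" using pp by simp
    show "\<forall>p\<in>set ws. \<exists>u. \<forall>c. foldl (tf_step A) c p = delta A c u" using pp by simp
  qed
  obtain u where u: "\<And>c. foldl (tf_step A) c (concat ws) = delta A c u"
    using fold_concat_ex[OF pf] by blast
  have x0FQ: "\<forall>x\<in>set x0. is_FQ x" using RFQ[OF d(2)] by simp
  have cw: "dropWhile is_FQ (concat ws) = concat ws" "tf_start A (concat ws) = init_conf A"
    using concat_nonFQ[OF pc] by auto
  have tfw: "tf A w = delta A (tf_start A w) u"
    unfolding tf_def using d(1) x0FQ cw u by simp
  have "\<exists>dd \<in> rConf A. lang A (tf_start A w) = lang A dd"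
  proof (cases x0)
    case Nil then show ?thesis using d(1) cw init_rConf by auto
  next
    case (Cons x r')
    have "(u0 @ x0) ! length u0 = x" using Cons by simp
    then obtain v i where v: "v \<in> WM A" "x = FQ (snd (nuA A (drop i v)))"
      using RK1[OF d(2), of "length u0"] Cons by auto
    have "tf_start A w = ([vbot A], snd (nuA A (drop i v)))" using d(1) Cons v by (simp add: tf_start_def)
    then have "lang A (tf_start A w) = lang A (delta A (init_conf A) (drop i v))"
      using start_lang[OF wf drop_WM_DW[OF v(1)]] by simp
    then show ?thesis using rConf_delta[OF init_rConf] by blast
  qed
  then obtain dd where dd: "dd \<in> rConf A" "lang A (tf_start A w) = lang A dd" by blast
  have "lang A (tf A w) = lang A (delta A dd u)" using tfw lang_delta_cong[OF dd(2)] by simp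
  then show "r \<in> Rep A" using w(2) Rep_memI[OF rConf_delta[OF dd(1)]] unfolding nu_f_def by blast
qed

lemma Rep_sub: "Rep A \<subseteq> nu_f A ` Flat A"
proof
  fix r assume "r \<in> Rep A"
  then obtain c where c: "c \<in> rConf A" "r = rep A c" unfolding Rep_def by blast
  then obtain w where cw: "c = delta A (init_conf A) w" unfolding rConf_def by blast
  obtain u0 ps where D: "w = u0 @ concat ps" "u0 \<in> DW A"
      "\<forall>p\<in>set ps. (\<exists>a\<in>sig_c A. p = [a]) \<or> (p \<in> WM A \<and> p \<noteq> [])"
    using decomp[OF wf] by blast
  define fl where "fl = (\<lambda>p. if (\<exists>a\<in>sig_c A. p = [a]) then [FC (hd p)] else sigma1 A p)"
  define fw where "fw = sigma0 A u0 @ concat (map fl ps)"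
  have flC: "fl p \<in> {[FC a] | a. a \<in> sig_c A} \<union> S1 A" if "p \<in> set ps" for p
    using D(3) that unfolding fl_def S1_def by auto
  have s0: "sigma0 A u0 \<in> S0 A" unfolding S0_def using D(2) by blast
  have "set (map fl ps) \<subseteq> {[FC a] | a. a \<in> sig_c A} \<union> S1 A" using flC by auto
  then have kk: "concat (map fl ps) \<in> kstar ({[FC a] | a. a \<in> sig_c A} \<union> S1 A)"
    unfolding kstar_def by blast
  have fwF: "fw \<in> Flat A" unfolding fw_def Flat_def conc_def
    using s0 kk by blast
  have flprop: "\<forall>p\<in>set ps. \<forall>c. foldl (tf_step A) c (fl p) = delta A c p"
  proof (intro ballI allI)
    fix p c assume p: "p \<in> set ps"
    show "foldl (tf_step A) c (fl p) = delta A c p"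
    proof (cases "\<exists>a\<in>sig_c A. p = [a]")
      case True then show ?thesis by (auto simp: fl_def delta_def)
    next
      case False
      then have pW: "p \<in> WM A" using D(3) p by auto
      obtain al q where cq: "c = (al, q)" by (cases c)
      have "\<forall>x\<in>set (map (\<lambda>i. FQ (snd (nuA A (drop i p)))) [1..<length p]). is_FQ x" by auto
      then show ?thesis using False cq WM_delta[OF wf pW]
        by (simp add: fl_def sigma1_def fold_allFQ)
    qed
  qed
  have flnon: "\<forall>q\<in>set (map fl ps). q \<noteq> [] \<and> \<not> is_FQ (hd q)" by (auto simp: fl_def sigma1_def)
  have s0FQ: "\<forall>x\<in>set (sigma0 A u0). is_FQ x" by (auto simp: sigma0_def)
  note cw2 = concat_nonFQ[OF flnon, of A]
  have tfw: "tf A fw = delta A (tf_start A fw) (concat ps)"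
    unfolding tf_def fw_def using s0FQ cw2 fold_concat[OF flprop] by simp
  have st: "lang A (tf_start A fw) = lang A (delta A (init_conf A) u0)"
  proof (cases u0)
    case Nil then show ?thesis using cw2 by (simp add: fw_def sigma0_def)
  next
    case (Cons x r')
    then have "\<exists>rest. fw = FQ (snd (nuA A u0)) # rest"
      by (simp add: fw_def sigma0_def upt_conv_Cons del: upt_Suc)
    then have "tf_start A fw = ([vbot A], snd (nuA A u0))" by (auto simp: tf_start_def)
    then show ?thesis using start_lang[OF wf D(2)] by simp
  qed
  have "lang A (tf A fw) = lang A c"
    using tfw lang_delta_cong[OF st, of "concat ps"] cw D(1) by (simp add: delta_append)
  then have "nu_f A fw = r" using c(2) rep_cong unfolding nu_f_def by blast
  then show "r \<in> nu_f A ` Flat A" using fwF by blast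
qed

end

theorem proposition13:
  fixes A :: "('q::{finite,linorder}, 'a::finite, 'g::{finite,linorder}) vpa"
    and R :: "('q \<Rightarrow> 'q) \<Rightarrow> ('a, 'q) fsym list set"
  assumes "wf_vpa A"
    and "lang A (init_conf A) \<noteq> {}"
    and "lang A (init_conf A) \<noteq> UNIV"
    and "bounded (S0 A)"
    and "\<And>\<tau>. bounded_overapprox {x. FT \<tau> # x \<in> S1 A} (R \<tau>)"
  shows "nu_f A ` Flat A = Rep A \<and> nu_f A ` RegFlat A R = Rep A"
proof -
  have F: "Flat A \<subseteq> RegFlat A R" using Flat_sub[OF assms(1) assms(5)] .
  have 1: "nu_f A ` RegFlat A R \<subseteq> Rep A" using RegFlat_sub[OF assms(1) assms(5)] .
  have 2: "Rep A \<subseteq> nu_f A ` Flat A" using Rep_sub[OF assms(1) assms(5)] .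
  have 3: "nu_f A ` Flat A \<subseteq> nu_f A ` RegFlat A R" using F by (rule image_mono)
  have e1: "nu_f A ` Flat A = Rep A" using 3 1 2 by (intro subset_antisym) (rule order_trans, assumption+)
  have e2: "nu_f A ` RegFlat A R = Rep A" using 3 1 2 by (intro subset_antisym) (assumption, rule order_trans, assumption+)
  show ?thesis using e1 e2 by (rule conjI)
qed

end
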